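(* Let $G=(V,E)$ be a graph with no isolated vertices and maximum degree $\Delta$, and let $m\ge1$ be an integer. The greedy algorithm applied to $U=V$ and the function $f(A)=\sum_{v\in V}m_A(v)$ returns a fault-tolerant total dominating set $S$ (with parameter $m$) satisfying $|S|\le\big(1+\ln(\Delta+m-1)\big)\cdot|S^*|$, where $S^*$ is a minimum-cardinality fault-tolerant total dominating set of $G$.
   Context: $N(v)$ is the neighborhood of $v$, $N_C(v)=N(v)\cap C$. $m_A(v)=m$ if [$v\notin A$ and $|N_A(v)|\ge m$] or [$v\in A$ and $|N_A(v)|>0$]; $m_A(v)=m-1$ if $v\in A$ and $|N_A(v)|=0$; $m_A(v)=|N_A(v)|$ otherwise. $\Delta_x f(A)=f(A\cup\{x\})-f(A)$. The greedy algorithm: start with $S=\emptyset$; while some $u\in U\setminus S$ has $\Delta_u f(S)>0$, pick $x\in U\setminus S$ maximizing $\Delta_u f(S)$ (ties arbitrary) and add it to $S$; return $S$. A fault-tolerant total dominating set with parameter $m$ is a set $S\subseteq V$ such that every $v\in V\setminus S$ has at least $m$ neighbors in $S$ and every $v\in S$ has at least one neighbor in $S$. *)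

theory Defs
  imports Complex_Main
begin

definition nbhd :: "'a set \<Rightarrow> ('a \<Rightarrow> 'a \<Rightarrow> bool) \<Rightarrow> 'a \<Rightarrow> 'a set" where
  "nbhd V E v = {u \<in> V. E v u}"

definition nbhd_in :: "'a set \<Rightarrow> ('a \<Rightarrow> 'a \<Rightarrow> bool) \<Rightarrow> 'a set \<Rightarrow> 'a \<Rightarrow> 'a set" where
  "nbhd_in V E C v = nbhd V E v \<inter> C"

definition max_degree :: "'a set \<Rightarrow> ('a \<Rightarrow> 'a \<Rightarrow> bool) \<Rightarrow> nat" where
  "max_degree V E = Max ((\<lambda>v. card (nbhd V E v)) ` V)"

definition mA :: "'a set \<Rightarrow> ('a \<Rightarrow> 'a \<Rightarrow> bool) \<Rightarrow> nat \<Rightarrow> 'a set \<Rightarrow> 'a \<Rightarrow> nat" where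
  "mA V E m A v =
     (if (v \<notin> A \<and> card (nbhd_in V E A v) \<ge> m) \<or> (v \<in> A \<and> card (nbhd_in V E A v) > 0) then m
      else if v \<in> A \<and> card (nbhd_in V E A v) = 0 then m - 1
      else card (nbhd_in V E A v))"

definition f_ftd :: "'a set \<Rightarrow> ('a \<Rightarrow> 'a \<Rightarrow> bool) \<Rightarrow> nat \<Rightarrow> 'a set \<Rightarrow> int" where
  "f_ftd V E m A = (\<Sum>v\<in>V. int (mA V E m A v))"

definition marginal :: "('a set \<Rightarrow> int) \<Rightarrow> 'a \<Rightarrow> 'a set \<Rightarrow> int" where
  "marginal f x A = f (insert x A) - f A"

text \<open>Reachable states of the greedy algorithm (ties broken arbitrarily).\<close>
inductive greedy_reach :: "'a set \<Rightarrow> ('a set \<Rightarrow> int) \<Rightarrow> 'a set \<Rightarrow> bool" for U f where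
  start: "greedy_reach U f {}"
| step: "\<lbrakk> greedy_reach U f S; \<exists>u \<in> U - S. marginal f u S > 0; x \<in> U - S;
           \<forall>u \<in> U - S. marginal f u S \<le> marginal f x S \<rbrakk>
         \<Longrightarrow> greedy_reach U f (insert x S)"

definition greedy_output :: "'a set \<Rightarrow> ('a set \<Rightarrow> int) \<Rightarrow> 'a set \<Rightarrow> bool" where
  "greedy_output U f S \<longleftrightarrow> greedy_reach U f S \<and> \<not> (\<exists>u \<in> U - S. marginal f u S > 0)"

definition is_fttds :: "'a set \<Rightarrow> ('a \<Rightarrow> 'a \<Rightarrow> bool) \<Rightarrow> nat \<Rightarrow> 'a set \<Rightarrow> bool" where
  "is_fttds V E m S \<longleftrightarrow> S \<subseteq> V \<and>
     (\<forall>v \<in> V - S. card (nbhd_in V E S v) \<ge> m) \<and>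
     (\<forall>v \<in> S. card (nbhd_in V E S v) \<ge> 1)"

definition is_min_fttds :: "'a set \<Rightarrow> ('a \<Rightarrow> 'a \<Rightarrow> bool) \<Rightarrow> nat \<Rightarrow> 'a set \<Rightarrow> bool" where
  "is_min_fttds V E m S \<longleftrightarrow> is_fttds V E m S \<and>
     (\<forall>T. is_fttds V E m T \<longrightarrow> card S \<le> card T)"

end

theory Submission
  imports Defs
begin

definition Phi :: "nat \<Rightarrow> nat \<Rightarrow> real \<Rightarrow> real" where
  "Phi k d r = real k * ln (real d) + (if r \<le> real k then real k - r else - real k * ln (r / real k))"

lemma Phi_ge: "r \<ge> real k \<Longrightarrow> Phi k d r = real k * ln (real d) - real k * ln (r / real k)"
  unfolding Phi_def by (cases "r \<le> real k") auto

lemma phi_step: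
  fixes r \<delta> :: int
  assumes k: "k \<ge> 1" and d: "d \<ge> 1" and dl: "\<delta> \<ge> 1" and kd: "int k * \<delta> \<ge> r" and r': "r - \<delta> \<ge> 0"
  shows "Phi k d (real_of_int r) + 1 \<le> Phi k d (real_of_int (r - \<delta>))"
proof -
  have lnd: "ln (real d) \<ge> 0" using d by simp
  consider "r \<le> int k" | "r > int k" "r - \<delta> \<le> int k - 1" | "r > int k" "r - \<delta> \<ge> int k" by linarith
  then show ?thesis
  proof cases
    case 1
    then show ?thesis unfolding Phi_def using dl by auto
  next
    case 2
    have "real_of_int r / real k \<ge> 1" using 2 k by (simp add: field_simps)
    then have "ln (real_of_int r / real k) \<ge> 0" by simp
    then have "real k * ln (real_of_int r / real k) \<ge> 0" by simp
    then show ?thesis unfolding Phi_def using 2 by auto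
  next
    case 3
    define R where "R = real_of_int r"
    define R' where "R' = real_of_int (r - \<delta>)"
    have Rpos: "R > 0" "R' > 0" using 3 k unfolding R_def R'_def by auto
    have "ln (R' / R) \<le> R' / R - 1" by (rule ln_le_minus_one) (use Rpos in auto)
    also have "R' / R - 1 = - real_of_int \<delta> / R" using Rpos unfolding R_def R'_def by (simp add: field_simps)
    also have "- real_of_int \<delta> / R \<le> - 1 / real k"
    proof -
      have "real k * real_of_int \<delta> \<ge> R" unfolding R_def using kd by (metis of_int_le_iff of_int_mult of_int_of_nat_eq)
      then show ?thesis using Rpos k by (simp add: field_simps)
    qed
    finally have h: "ln (R' / R) \<le> - 1 / real k" .
    have "ln (R' / R) = ln R' - ln R" using Rpos by (simp add: ln_div)
    moreover have "ln (R' / real k) = ln R' - ln (real k)" "ln (R / real k) = ln R - ln (real k)"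
      using Rpos k by (simp_all add: ln_div)
    moreover have "real k * (- 1 / real k) = -1" using k by simp
    ultimately have "real k * ln (R' / real k) \<le> real k * ln (R / real k) - 1"
      using h k by (smt (verit, ccfv_SIG) mult_left_mono of_nat_0_le_iff right_diff_distrib)
    moreover have "R \<ge> real k" "R' \<ge> real k" using 3 unfolding R_def R'_def by auto
    ultimately show ?thesis unfolding R_def[symmetric] R'_def[symmetric] using Phi_ge by simp
  qed
qed

locale ftd =
  fixes V :: "'a set" and E :: "'a \<Rightarrow> 'a \<Rightarrow> bool" and m :: nat
  assumes finV: "finite V" and sym: "\<And>u v. E u v \<Longrightarrow> E v u" and irrefl: "\<And>v. \<not> E v v"
    and m_ge: "m \<ge> 1"
begin

definition w where "w A v = card (nbhd_in V E A v) + (if v \<in> A then m - 1 else 0)"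

abbreviation F where "F \<equiv> f_ftd V E m"

lemma fin_nb: "finite (nbhd_in V E A v)" using finV unfolding nbhd_in_def nbhd_def by auto

lemma mA_min: "mA V E m A v = min m (w A v)"
  using m_ge unfolding mA_def w_def by auto

lemma card_nb_insert: "card (nbhd_in V E (insert y A) v) =
   card (nbhd_in V E A v) + (if y \<notin> A \<and> y \<in> V \<and> E v y then 1 else 0)"
proof (cases "y \<in> V \<and> E v y")
  case True
  then have eq: "nbhd_in V E (insert y A) v = insert y (nbhd_in V E A v)"
    unfolding nbhd_in_def nbhd_def by auto
  show ?thesis
  proof (cases "y \<in> A")
    case True
    then have "y \<in> nbhd_in V E A v" using \<open>y \<in> V \<and> E v y\<close> unfolding nbhd_in_def nbhd_def by auto
    then show ?thesis using eq True by (simp add: insert_absorb)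
  next
    case False
    then have "y \<notin> nbhd_in V E A v" unfolding nbhd_in_def nbhd_def by auto
    then show ?thesis using eq False \<open>y \<in> V \<and> E v y\<close> fin_nb by simp
  qed
next
  case False
  then have eq: "nbhd_in V E (insert y A) v = nbhd_in V E A v"
    unfolding nbhd_in_def nbhd_def by auto
  then show ?thesis using False by simp
qed

lemma w_insert: "w (insert y A) v = w A v +
   (if y \<notin> A then (if y \<in> V \<and> E v y then 1 else 0) + (if y = v then m - 1 else 0) else 0)"
  unfolding w_def card_nb_insert using irrefl[of v] by auto

lemma w_mono: assumes "A \<subseteq> C" shows "w A v \<le> w C v"
proof -
  have "card (nbhd_in V E A v) \<le> card (nbhd_in V E C v)"
    using assms fin_nb[of C v] by (intro card_mono) (auto simp: nbhd_in_def)
  then show ?thesis unfolding w_def using assms by auto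
qed

lemma minlem: "(a::nat) \<le> a' \<Longrightarrow> e' \<le> e \<Longrightarrow>
   int (min m (a'+e')) - int (min m a') \<le> int (min m (a+e)) - int (min m a)"
  by (auto simp: min_def)

lemma g_dimret: assumes "A \<subseteq> C"
  shows "int (mA V E m (insert y C) v) - int (mA V E m C v)
     \<le> int (mA V E m (insert y A) v) - int (mA V E m A v)"
proof -
  define c where "c = (if y \<in> V \<and> E v y then 1 else 0) + (if y = v then m - 1 else (0::nat))"
  have 1: "w (insert y C) v = w C v + (if y \<notin> C then c else 0)" unfolding c_def w_insert ..
  have 2: "w (insert y A) v = w A v + (if y \<notin> A then c else 0)" unfolding c_def w_insert ..
  have 3: "(if y \<notin> C then c else 0) \<le> (if y \<notin> A then c else 0)" using assms by auto
  have 4: "w A v \<le> w C v" using w_mono assms .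
  show ?thesis unfolding mA_min 1 2 by (rule minlem[OF 4 3])
qed

lemma f_dimret: "A \<subseteq> C \<Longrightarrow> marginal F y C \<le> marginal F y A"
  unfolding marginal_def f_ftd_def
  by (simp add: sum_subtractf[symmetric] sum_mono g_dimret)

lemma f_union_bound: "finite B \<Longrightarrow> F (A \<union> B) - F A \<le> (\<Sum>y\<in>B. marginal F y A)"
proof (induction B rule: finite_induct)
  case empty show ?case by simp
next
  case (insert y B)
  have "F (A \<union> insert y B) - F A = marginal F y (A \<union> B) + (F (A \<union> B) - F A)"
    unfolding marginal_def by simp
  also have "\<dots> \<le> marginal F y A + (\<Sum>y\<in>B. marginal F y A)"
    using f_dimret[of A "A \<union> B" y] insert.IH by simp
  finally show ?case using insert by simp
qed

lemma f_mono: assumes "A \<subseteq> C" shows "F A \<le> F C"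
  unfolding f_ftd_def mA_min
proof (rule sum_mono)
  fix v show "int (min m (w A v)) \<le> int (min m (w C v))" using w_mono[OF assms, of v] by simp
qed

lemma f_le: "F A \<le> int m * int (card V)"
proof -
  have "F A \<le> of_nat (card V) * int m" unfolding f_ftd_def
    by (rule sum_bounded_above) (simp add: mA_min)
  then show ?thesis by (simp add: mult.commute)
qed

lemma f_full: assumes "is_fttds V E m S" shows "F S = int m * int (card V)"
proof -
  have "\<forall>v\<in>V. mA V E m S v = m" using assms m_ge unfolding is_fttds_def mA_def by fastforce
  then have "F S = (\<Sum>v\<in>V. int m)" unfolding f_ftd_def by simp
  then show ?thesis by simp
qed

lemma full_fttds: assumes "S \<subseteq> V" "F S = int m * int (card V)" shows "is_fttds V E m S"
proof -
  have all: "\<forall>v\<in>V. mA V E m S v = m"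
  proof (rule ccontr)
    assume "\<not> ?thesis"
    then obtain v where v: "v \<in> V" "mA V E m S v \<noteq> m" by auto
    have "F S < (\<Sum>v\<in>V. int m)" unfolding f_ftd_def
    proof (rule sum_strict_mono_ex1[OF finV])
      show "\<forall>x\<in>V. int (mA V E m S x) \<le> int m" by (simp add: mA_min)
      show "\<exists>a\<in>V. int (mA V E m S a) < int m" using v by (intro bexI[of _ v]) (auto simp: mA_min)
    qed
    then show False using assms by simp
  qed
  show ?thesis unfolding is_fttds_def
  proof (intro conjI ballI)
    show "S \<subseteq> V" by fact
  next
    fix v assume v: "v \<in> V - S"
    then have "mA V E m S v = m" using all by auto
    then show "m \<le> card (nbhd_in V E S v)" using v unfolding mA_def by (auto split: if_splits)
  next
    fix v assume v: "v \<in> S"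
    then have "mA V E m S v = m" using all assms(1) by auto
    then show "1 \<le> card (nbhd_in V E S v)" using v m_ge unfolding mA_def by (auto split: if_splits)
  qed
qed

lemma f_empty: "F {} = 0"
  unfolding f_ftd_def mA_def nbhd_in_def using m_ge by simp

lemma nb_single: "y \<in> V \<Longrightarrow> nbhd_in V E {y} v = (if E v y then {y} else {})"
  by (auto simp: nbhd_in_def nbhd_def)

lemma f_single: assumes y: "y \<in> V" shows "F {y} \<le> int (max_degree V E + m - 1)"
proof -
  have "F {y} \<le> (\<Sum>v\<in>V. int (w {y} v))" unfolding f_ftd_def mA_min by (intro sum_mono) simp
  also have "\<dots> = int (\<Sum>v\<in>V. w {y} v)" by simp
  also have "(\<Sum>v\<in>V. w {y} v) = (\<Sum>v\<in>V. (if E v y then 1 else 0) + (if v = y then m - 1 else 0))"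
    by (intro sum.cong) (auto simp: w_def nb_single[OF y])
  also have "\<dots> = card {v\<in>V. E v y} + (m - 1)"
    using finV y by (simp add: sum.distrib sum.inter_filter[symmetric])
  also have "{v\<in>V. E v y} = nbhd V E y" unfolding nbhd_def using sym by auto
  also have "card (nbhd V E y) \<le> max_degree V E"
    unfolding max_degree_def using finV y by (intro Max_ge) auto
  finally show ?thesis using m_ge by simp
qed

lemma reach_sub: "greedy_reach V F S \<Longrightarrow> S \<subseteq> V"
  by (induction rule: greedy_reach.induct) auto

lemma invariant:
  assumes opt: "is_fttds V E m Ss" and k: "card Ss = k" "k \<ge> 1" and d: "d \<ge> 1"
    and Fkd: "int m * int (card V) \<le> int k * int d"
    and reach: "greedy_reach V F S"
  shows "real (card S) \<le> Phi k d (real_of_int (int m * int (card V) - F S))"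
  using reach
proof (induction rule: greedy_reach.induct)
  case start
  let ?r = "real_of_int (int m * int (card V))"
  have r0: "?r \<ge> 0" by simp
  have "?r \<le> real k * real d" using Fkd by (metis of_int_le_iff of_int_mult of_int_of_nat_eq)
  have lnd: "ln (real d) \<ge> 0" using d by simp
  show ?case
  proof (cases "?r \<le> real k")
    case True
    then show ?thesis unfolding Phi_def f_empty using lnd by simp
  next
    case False
    then have "?r / real k \<le> real d" using \<open>?r \<le> real k * real d\<close> k
      by (simp add: field_simps)
    moreover have "?r / real k > 0" using False k by simp
    ultimately have "ln (?r / real k) \<le> ln (real d)" by simp
    then have "real k * ln (?r / real k) \<le> real k * ln (real d)" by (simp add: mult_left_mono)
    then show ?thesis unfolding Phi_def f_empty using False by simp
  qed
next
  case (step S x)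
  define M where "M = int m * int (card V)"
  define \<delta> where "\<delta> = marginal F x S"
  have SV: "S \<subseteq> V" using step.hyps(1) reach_sub by blast
  have finS: "finite S" using SV finV finite_subset by blast
  have finSs: "finite Ss" using opt finV finite_subset unfolding is_fttds_def by blast
  have dpos: "\<delta> \<ge> 1" using step.hyps(2,4) unfolding \<delta>_def by force
  have "F (S \<union> Ss) - F S \<le> (\<Sum>y\<in>Ss. marginal F y S)" by (rule f_union_bound[OF finSs])
  also have "\<dots> \<le> (\<Sum>y\<in>Ss. \<delta>)"
  proof (rule sum_mono)
    fix y assume "y \<in> Ss"
    then have "y \<in> V" using opt unfolding is_fttds_def by auto
    show "marginal F y S \<le> \<delta>"
    proof (cases "y \<in> S")
      case True then show ?thesis using dpos by (simp add: marginal_def insert_absorb)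
    next
      case False then show ?thesis using step.hyps(4) \<open>y \<in> V\<close> unfolding \<delta>_def by auto
    qed
  qed
  also have "\<dots> = int k * \<delta>" using k by simp
  finally have b1: "F (S \<union> Ss) - F S \<le> int k * \<delta>" .
  have "F (S \<union> Ss) = M" unfolding M_def
    using f_mono[of Ss "S \<union> Ss"] f_full[OF opt] f_le[of "S \<union> Ss"] by simp
  then have b2: "int k * \<delta> \<ge> M - F S" using b1 by simp
  have eqF: "M - F (insert x S) = (M - F S) - \<delta>" unfolding \<delta>_def marginal_def by simp
  have nn: "(M - F S) - \<delta> \<ge> 0" using f_le[of "insert x S"] eqF unfolding M_def by simp
  have "real (card (insert x S)) = real (card S) + 1" using step.hyps(3) finS by simp
  also have "\<dots> \<le> Phi k d (real_of_int (M - F S)) + 1" using step.IH unfolding M_def by simp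
  also have "\<dots> \<le> Phi k d (real_of_int ((M - F S) - \<delta>))"
    by (rule phi_step[OF k(2) d dpos b2 nn])
  finally show ?case using eqF unfolding M_def by (metis diff_diff_eq2 diff_add_cancel)
qed

end

theorem mainTheorem10:
  fixes V :: "'a set" and E :: "'a \<Rightarrow> 'a \<Rightarrow> bool" and m :: nat and S Sstar :: "'a set"
  assumes finV: "finite V"
    and sym: "\<And>u v. E u v \<Longrightarrow> E v u"
    and irrefl: "\<And>v. \<not> E v v"
    and no_isolated: "\<And>v. v \<in> V \<Longrightarrow> nbhd V E v \<noteq> {}"
    and m_ge: "m \<ge> 1"
    and greedy: "greedy_output V (f_ftd V E m) S"
    and opt: "is_min_fttds V E m Sstar"
  shows "is_fttds V E m S \<and>
         real (card S) \<le> (1 + ln (real (max_degree V E + m - 1))) * real (card Sstar)"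
proof -
  interpret ftd V E m using finV sym irrefl m_ge by unfold_locales
  have reach: "greedy_reach V (f_ftd V E m) S" and stop: "\<not> (\<exists>u \<in> V - S. marginal (f_ftd V E m) u S > 0)"
    using greedy unfolding greedy_output_def by auto
  have SV: "S \<subseteq> V" using reach_sub[OF reach] .
  have optf: "is_fttds V E m Sstar" using opt unfolding is_min_fttds_def by auto
  have SsV: "Sstar \<subseteq> V" using optf unfolding is_fttds_def by auto
  have finSs: "finite Sstar" using SsV finV finite_subset by blast
  have "F (S \<union> V) - F S \<le> (\<Sum>y\<in>V. marginal F y S)" by (rule f_union_bound[OF finV])
  also have "\<dots> \<le> (\<Sum>y\<in>V. 0)"
  proof (rule sum_mono)
    fix y assume "y \<in> V"
    show "marginal F y S \<le> 0"
    proof (cases "y \<in> S")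
      case True then show ?thesis by (simp add: marginal_def insert_absorb)
    next
      case False then show ?thesis using stop \<open>y \<in> V\<close> by force
    qed
  qed
  finally have "F V \<le> F S" using SV by (simp add: Un_absorb1)
  moreover have "F V = int m * int (card V)"
  proof (rule f_full)
    show "is_fttds V E m V" unfolding is_fttds_def
    proof (intro conjI ballI)
      fix v assume v: "v \<in> V"
      have "nbhd_in V E V v = nbhd V E v" unfolding nbhd_in_def nbhd_def by auto
      moreover have "finite (nbhd V E v)" using finV unfolding nbhd_def by auto
      ultimately show "1 \<le> card (nbhd_in V E V v)" using no_isolated[OF v]
        by (simp add: Suc_le_eq card_gt_0_iff)
    qed auto
  qed
  ultimately have FS: "F S = int m * int (card V)" using f_le[of S] by simp
  have fttds: "is_fttds V E m S" by (rule full_fttds[OF SV FS])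
  show ?thesis
  proof (cases "V = {}")
    case True
    then have "S = {}" "Sstar = {}" using SV SsV by auto
    then show ?thesis using fttds by simp
  next
    case False
    then obtain v0 where v0: "v0 \<in> V" by auto
    define k where "k = card Sstar"
    define d where "d = max_degree V E + m - 1"
    have "Sstar \<noteq> {}"
    proof
      assume "Sstar = {}"
      then have "card (nbhd_in V E Sstar v0) = 0" unfolding nbhd_in_def by simp
      then show False using optf v0 m_ge unfolding is_fttds_def by force
    qed
    then have k1: "k \<ge> 1" unfolding k_def using finSs by (simp add: Suc_le_eq card_gt_0_iff)
    have "card (nbhd V E v0) \<ge> 1" using no_isolated[OF v0] finV
      by (simp add: Suc_le_eq card_gt_0_iff nbhd_def)
    moreover have "card (nbhd V E v0) \<le> max_degree V E"
      unfolding max_degree_def using finV v0 by (intro Max_ge) auto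
    ultimately have d1: "d \<ge> 1" unfolding d_def using m_ge by simp
    have "F Sstar - F {} \<le> (\<Sum>y\<in>Sstar. marginal F y {})"
      using f_union_bound[OF finSs, of "{}"] by simp
    also have "\<dots> \<le> (\<Sum>y\<in>Sstar. int d)"
      by (rule sum_mono) (use SsV f_single f_empty in \<open>auto simp: marginal_def d_def\<close>)
    finally have Fkd: "int m * int (card V) \<le> int k * int d"
      using f_full[OF optf] f_empty unfolding k_def by simp
    have "real (card S) \<le> Phi k d (real_of_int (int m * int (card V) - F S))"
      by (rule invariant[OF optf k_def[symmetric] k1 d1 Fkd reach])
    also have "\<dots> = real k * ln (real d) + real k" unfolding FS Phi_def by simp
    also have "\<dots> = (1 + ln (real d)) * real k" by (simp add: algebra_simps)
    finally show ?thesis using fttds unfolding k_def d_def by simp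
  qed
qed

end
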